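(* For all $0<x<\pi/2$, \[ \frac{\pi^2+\frac{\pi^2-12}{3}x^2+\frac{384-4\pi^4}{3\pi^4}x^4}{\pi^2-4x^2}<\frac{\tan x}{x}<\frac{\pi^2+\frac{72-8\pi^2}{\pi^2}x^2+\frac{16\pi^2-160}{\pi^4}x^4}{\pi^2-4x^2}. \] *)

theory Defs
  imports Complex_Main
begin

end

theory Submission
  imports Defs "HOL-Analysis.Gamma_Function"
begin


lemma Gamma_reflection_real:
  fixes z :: real assumes "0 < z" "z < 1"
  shows "Gamma z * Gamma (1 - z) * sin (pi * z) = pi"
proof -
  have s: "sin (pi * z) > 0" using assms by (intro sin_gt_zero) auto
  have "Gamma (complex_of_real z) * Gamma (1 - complex_of_real z) = of_real pi / sin (of_real pi * of_real z)"
    by (rule Gamma_reflection_complex)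
  hence "complex_of_real (Gamma z * Gamma (1 - z)) = complex_of_real (pi / sin (pi * z))"
    by (simp add: Gamma_complex_of_real[symmetric] sin_of_real[symmetric])
  hence "Gamma z * Gamma (1 - z) = pi / sin (pi * z)" using of_real_eq_iff by blast
  thus ?thesis using s by (simp add: field_simps)
qed

lemma Digamma_reflection_real:
  fixes z :: real assumes "0 < z" "z < 1"
  shows "Digamma (1 - z) - Digamma z = pi * cos (pi * z) / sin (pi * z)"
proof -
  define F where "F y = Gamma y * Gamma (1 - y) * sin (pi * y)" for y :: real
  have nz: "y \<notin> \<int>\<^sub>\<le>\<^sub>0" if "y > 0" for y :: real using that by (auto elim!: nonpos_Ints_cases)
  have d1: "(F has_field_derivative
      (Gamma z * Digamma z * Gamma (1 - z) * sin (pi * z) + Gamma z * (Gamma (1 - z) * Digamma (1 - z) * (-1)) * sin (pi*z)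
        + Gamma z * Gamma (1 - z) * (cos (pi * z) * pi))) (at z)"
    unfolding F_def using assms nz[of z] nz[of "1-z"]
    by (auto intro!: derivative_eq_intros simp: algebra_simps)
  have d0: "(F has_field_derivative 0) (at z)"
  proof (rule has_field_derivative_transform_within_open[of "\<lambda>_. pi" _ _ "{0<..<1}"])
    show "((\<lambda>_. pi) has_field_derivative 0) (at z)" by simp
  qed (use assms in \<open>auto simp: F_def Gamma_reflection_real\<close>)
  have eq: "Gamma z * Digamma z * Gamma (1 - z) * sin (pi * z) + Gamma z * (Gamma (1 - z) * Digamma (1 - z) * (-1)) * sin (pi*z)
        + Gamma z * Gamma (1 - z) * (cos (pi * z) * pi) = 0"
    using DERIV_unique[OF d1 d0] .
  have g: "Gamma z * Gamma (1 - z) > 0" using assms by simp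
  have s: "sin (pi * z) > 0" using assms by (intro sin_gt_zero) auto
  from eq have "Gamma z * Gamma (1 - z) * ((Digamma z - Digamma (1 - z)) * sin (pi * z) + pi * cos (pi * z)) = 0"
    by (simp add: algebra_simps)
  hence "(Digamma z - Digamma (1 - z)) * sin (pi * z) + pi * cos (pi * z) = 0" using g by (metis mult_eq_0_iff less_irrefl)
  thus ?thesis using s by (simp add: field_simps)
qed



lemma deriv_eq_on_open:
  fixes f g :: "real \<Rightarrow> real"
  assumes "open S" "t \<in> S" "\<And>y. y \<in> S \<Longrightarrow> f y = g y"
    "(f has_real_derivative f') (at t)" "(g has_real_derivative g') (at t)"
  shows "f' = g'"
proof -
  have "(g has_real_derivative f') (at t)"
    using has_field_derivative_transform_within_open[OF assms(4) assms(1) assms(2)] assms(3) by blast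
  thus ?thesis using DERIV_unique assms(5) by blast
qed

lemma nz_half: fixes y :: real shows "y > 0 \<Longrightarrow> y \<notin> \<int>\<^sub>\<le>\<^sub>0" by (auto elim!: nonpos_Ints_cases)

lemma H_eq:
  fixes t :: real assumes "\<bar>t\<bar> < 1/2"
  shows "Digamma (1/2 + t) - Digamma (1/2 - t) = pi * sin (pi * t) / cos (pi * t)"
proof -
  have "Digamma (1 - (1/2 - t)) - Digamma (1/2 - t) = pi * cos (pi * (1/2 - t)) / sin (pi * (1/2 - t))"
    using assms by (intro Digamma_reflection_real) auto
  moreover have "cos (pi * (1/2 - t)) = sin (pi * t)" "sin (pi * (1/2 - t)) = cos (pi * t)"
    by (simp_all add: right_diff_distrib cos_diff sin_diff)
  ultimately show ?thesis by simp
qed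

lemma cos_pos_t: fixes t :: real assumes "\<bar>t\<bar> < 1/2" shows "cos (pi * t) > 0"
proof (intro cos_gt_zero_pi)
  have "pi * (-1/2) < pi * t" "pi * t < pi * (1/2)" using assms by (intro mult_strict_left_mono; auto simp: abs_less_iff)+
  thus "- (pi / 2) < pi * t" "pi * t < pi / 2" by auto
qed

lemma Polygamma1_half: "Polygamma 1 (1/2 :: real) = pi^2 / 2"
proof -
  define S where "S = {t :: real. \<bar>t\<bar> < 1/2}"
  have S: "open S" "0 \<in> S" unfolding S_def by (auto intro!: open_Collect_less continuous_intros)
  have d1: "((\<lambda>t. Digamma (1/2 + t) - Digamma (1/2 - t)) has_real_derivative
       Polygamma 1 (1/2 + 0) + Polygamma 1 (1/2 - 0)) (at (0::real))"
    by (auto intro!: derivative_eq_intros nz_half)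
  have d2: "((\<lambda>t. pi * sin (pi * t) / cos (pi * t)) has_real_derivative pi^2) (at (0::real))"
    by (auto intro!: derivative_eq_intros simp: power2_eq_square)
  have "Polygamma 1 (1/2 + 0) + Polygamma 1 (1/2 - 0) = pi^2"
    by (rule deriv_eq_on_open[OF S _ d1 d2]) (auto simp: S_def H_eq)
  thus ?thesis by simp
qed




lemma a1: "(cos (pi * t) * pi * pi * cos (pi * t) -
      pi * sin (pi * t) * - (sin (pi * t) * pi)) /
     (cos (pi * t) * cos (pi * t)) =
     pi\<^sup>2 / (cos (pi * t))\<^sup>2"
proof -
  have "cos (pi * t) * pi * pi * cos (pi * t) - pi * sin (pi * t) * - (sin (pi * t) * pi) = pi^2 * (sin (pi * t)^2 + cos (pi * t)^2)"
    by (unfold power2_eq_square) algebra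
  also have "\<dots> = pi^2" by simp
  finally show ?thesis by (simp add: power2_eq_square)
qed
lemma d_tan: "((\<lambda>t. pi * sin (pi * t) / cos (pi * t)) has_real_derivative pi^2 / cos (pi * t)^2) (at t)" if "cos (pi * t) \<noteq> 0"
    apply (rule derivative_eq_intros | simp)+
  using that a1 by auto
lemma d_sec2: "cos (pi * t) \<noteq> 0 \<Longrightarrow> ((\<lambda>t. pi^2 / cos (pi * t)^2) has_real_derivative 2 * pi^3 * sin (pi * t) / cos (pi * t)^3) (at t)"
  apply (rule derivative_eq_intros | simp)+
  by (simp add: field_simps power_numeral_reduce)

lemma d_last: "((\<lambda>t. 2 * pi^3 * sin (pi * t) / cos (pi * t)^3) has_real_derivative 2 * pi^4) (at (0::real))"
  apply (rule derivative_eq_intros | simp)+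
  by (simp add: power_numeral_reduce)

lemma Polygamma3_half: "Polygamma 3 (1/2 :: real) = pi^4"
proof -
  define S where "S = {t :: real. \<bar>t\<bar> < 1/2}"
  have S: "open S" unfolding S_def by (auto intro!: open_Collect_less continuous_intros)
  have hS: "\<bar>t\<bar> < 1/2" if "t \<in> S" for t using that by (simp add: S_def)
  have pos: "1/2 + t > 0" "1/2 - t > 0" if "t \<in> S" for t :: real using hS[OF that] by auto
  have eq1: "Polygamma 1 (1/2 + t) + Polygamma 1 (1/2 - t) = pi^2 / cos (pi * t)^2" if t: "t \<in> S" for t
  proof (rule deriv_eq_on_open[OF S t])
    show "Digamma (1/2 + y) - Digamma (1/2 - y) = pi * sin (pi * y) / cos (pi * y)" if "y \<in> S" for y
      using H_eq hS that by blast
    show "((\<lambda>t. Digamma (1/2 + t) - Digamma (1/2 - t)) has_real_derivative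
       Polygamma 1 (1/2 + t) + Polygamma 1 (1/2 - t)) (at t)"
      using pos[OF t] by (auto intro!: derivative_eq_intros nz_half simp: numeral_eq_Suc)
    show "((\<lambda>t. pi * sin (pi * t) / cos (pi * t)) has_real_derivative pi^2 / cos (pi * t)^2) (at t)"
      using cos_pos_t[OF hS[OF t]] by (intro d_tan) simp
  qed
  have eq2: "Polygamma 2 (1/2 + t) - Polygamma 2 (1/2 - t) = 2 * pi^3 * sin (pi * t) / cos (pi * t)^3" if t: "t \<in> S" for t
  proof (rule deriv_eq_on_open[OF S t])
    show "Polygamma 1 (1/2 + y) + Polygamma 1 (1/2 - y) = pi^2 / cos (pi * y)^2" if "y \<in> S" for y
      using eq1 that by blast
    show "((\<lambda>t. Polygamma 1 (1/2 + t) + Polygamma 1 (1/2 - t)) has_real_derivative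
       Polygamma 2 (1/2 + t) - Polygamma 2 (1/2 - t)) (at t)"
      using pos[OF t] by (auto intro!: derivative_eq_intros nz_half simp: numeral_eq_Suc)
    show "((\<lambda>t. pi^2 / cos (pi * t)^2) has_real_derivative 2 * pi^3 * sin (pi * t) / cos (pi * t)^3) (at t)"
      using cos_pos_t[OF hS[OF t]] by (intro d_sec2) simp
  qed
  have "Polygamma 3 (1/2 + 0) + Polygamma 3 (1/2 - 0) = (2 * pi^4 :: real)"
  proof (rule deriv_eq_on_open[OF S _ _ _ d_last])
    show "(0::real) \<in> S" by (simp add: S_def)
    show "Polygamma 2 (1/2 + y) - Polygamma 2 (1/2 - y) = 2 * pi^3 * sin (pi * y) / cos (pi * y)^3" if "y \<in> S" for y
      using eq2 that by blast
    show "((\<lambda>t. Polygamma 2 (1/2 + t) - Polygamma 2 (1/2 - t)) has_real_derivative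
       Polygamma 3 (1/2 + 0) + Polygamma 3 (1/2 - 0)) (at (0::real))"
      by (auto intro!: derivative_eq_intros nz_half simp: numeral_eq_Suc)
  qed
  thus ?thesis by simp
qed



lemma sum_odd2: "(\<lambda>k. 1 / (2 * real k + 1)^2) sums (pi^2 / 8)"
proof -
  have "(\<lambda>k. inverse ((1/2 + of_nat k)^Suc 1)) sums ((-1) ^ Suc 1 * Polygamma 1 (1/2::real) / fact 1)"
    by (rule Polygamma_LIMSEQ) auto
  moreover have "(-1) ^ Suc 1 * Polygamma 1 (1/2::real) / fact 1 = Polygamma 1 (1/2)" by simp
  hence "(-1) ^ Suc 1 * Polygamma 1 (1/2::real) / fact 1 = pi^2/2" by (simp only: Polygamma1_half)
  ultimately have "(\<lambda>k. inverse ((1/2 + real k)^2)) sums (pi^2/2)" by (simp only: Suc_1)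
  from sums_divide[OF this, of 4]
  have "(\<lambda>k. inverse ((1/2 + real k)^2) / 4) sums (pi^2 / 8)" by simp
  also have "(\<lambda>k. inverse ((1/2 + real k)^2) / 4) = (\<lambda>k. 1 / (2 * real k + 1)^2)"
  proof (rule ext)
    fix k
    have e: "1/2 + real k = (2 * real k + 1)/2" by simp
    show "inverse ((1/2 + real k)^2) / 4 = 1 / (2 * real k + 1)^2"
      by (simp only: e) (simp add: power_divide inverse_eq_divide)
  qed
  finally show ?thesis .
qed

lemma sum_odd4: "(\<lambda>k. 1 / (2 * real k + 1)^4) sums (pi^4 / 96)"
proof -
  have "(\<lambda>k. inverse ((1/2 + of_nat k)^Suc 3)) sums ((-1) ^ Suc 3 * Polygamma 3 (1/2::real) / fact 3)"
    by (rule Polygamma_LIMSEQ) auto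
  moreover have "(-1) ^ Suc 3 * Polygamma 3 (1/2::real) / fact 3 = pi^4/6" by (simp add: Polygamma3_half fact_numeral)
  moreover have "Suc 3 = 4" by simp
  ultimately have "(\<lambda>k. inverse ((1/2 + real k)^4)) sums (pi^4/6)" by (simp only:)
  from sums_divide[OF this, of 16]
  have "(\<lambda>k. inverse ((1/2 + real k)^4) / 16) sums (pi^4 / 96)" by simp
  also have "(\<lambda>k. inverse ((1/2 + real k)^4) / 16) = (\<lambda>k. 1 / (2 * real k + 1)^4)"
  proof (rule ext)
    fix k
    have e: "1/2 + real k = (2 * real k + 1)/2" by simp
    show "inverse ((1/2 + real k)^4) / 16 = 1 / (2 * real k + 1)^4"
      by (simp only: e) (simp add: power_divide inverse_eq_divide)
  qed
  finally show ?thesis .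
qed

lemma sum_tele: "(\<lambda>k. 1 / ((2 * real k + 1)^2 - 1)) sums (1/4)"
proof -
  define h where "h k = 1 / (4 * (real k + 1))" for k :: nat
  have "h \<longlonglongrightarrow> 0" unfolding h_def
    using tendsto_mult[OF tendsto_const[of "1/4"] LIMSEQ_inverse_real_of_nat]
    by (simp add: field_simps)
  from telescope_sums'[OF this] have "(\<lambda>n. h n - h (Suc n)) sums (1/4)" by (simp add: h_def)
  also have "(\<lambda>n. h n - h (Suc n)) = (\<lambda>k. 1 / ((2 * real (Suc k) + 1)^2 - 1))"
  proof (rule ext)
    fix n
    have p: "real n + 1 > 0" "real n + 2 > 0" by auto
    have eq: "(2 * real (Suc n) + 1)^2 - 1 = 4 * (real n + 1) * (real n + 2)"
      by (simp add: power2_eq_square algebra_simps)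
    have g1: "a > 0 \<Longrightarrow> 1 / (4 * a) - 1 / (4 * (a+1)) = 1 / (4 * a * (a + 1))" for a :: real
      by (simp add: divide_simps)
    have g: "m \<ge> 0 \<Longrightarrow> 1 / (4 * (m + 1)) - 1 / (4 * (m + 2)) = 1 / (4 * (m + 1) * (m + 2))" for m :: real
      using g1[of "m+1"] by (simp add: add.assoc)
    have "h n - h (Suc n) = 1 / (4 * (real n + 1)) - 1 / (4 * (real n + 2))"
      by (simp add: h_def add.assoc)
    also have "\<dots> = 1 / (4 * (real n + 1) * (real n + 2))" using p by (intro g) auto
    also have "\<dots> = 1 / ((2 * real (Suc n) + 1)^2 - 1)" by (simp only: eq)
    finally show "h n - h (Suc n) = 1 / ((2 * real (Suc n) + 1)^2 - 1)" .
  qed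
  finally show ?thesis by (subst (asm) sums_Suc_iff) simp
qed

lemma tan_series:
  fixes x :: real assumes x: "0 < x" "x < pi/2"
  shows "(\<lambda>k. 8 / ((2 * real k + 1)^2 * pi^2 - 4 * x^2)) sums (tan x / x)"
proof -
  define t where "t = x / pi"
  have t: "0 < t" "t < 1/2" using x pi_gt_zero by (auto simp: t_def field_simps)
  have xt: "x = pi * t" by (simp add: t_def)
  have H: "Digamma (1/2 + t) - Digamma (1/2 - t) = pi * sin x / cos x"
    using H_eq[of t] t by (simp add: xt)
  have s1: "(\<lambda>k. inverse (of_nat (Suc k)) - inverse ((1/2 + t) + of_nat k)) sums (Digamma (1/2 + t) + euler_mascheroni)"
    using summable_Digamma[of "1/2 + t"] t by (simp add: Digamma_def summable_sums)
  have s2: "(\<lambda>k. inverse (of_nat (Suc k)) - inverse ((1/2 - t) + of_nat k)) sums (Digamma (1/2 - t) + euler_mascheroni)"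
    using summable_Digamma[of "1/2 - t"] t by (simp add: Digamma_def summable_sums)
  from sums_diff[OF s1 s2]
  have "(\<lambda>k. inverse ((1/2 - t) + real k) - inverse ((1/2 + t) + real k)) sums (pi * sin x / cos x)"
    using H by simp
  from sums_divide[OF this, of "pi * x"]
  have "(\<lambda>k. (inverse ((1/2 - t) + real k) - inverse ((1/2 + t) + real k)) / (pi * x)) sums (tan x / x)"
    using pi_gt_zero x by (simp add: tan_def)
  also have "(\<lambda>k. (inverse ((1/2 - t) + real k) - inverse ((1/2 + t) + real k)) / (pi * x))
     = (\<lambda>k. 8 / ((2 * real k + 1)^2 * pi^2 - 4 * x^2))"
  proof (rule ext)
    fix k :: nat
    have a: "(1/2 - t) + real k > 0" "(1/2 + t) + real k > 0" using t by auto
    have "(2 * real k + 1)^2 * pi^2 - 4 * x^2 = 4 * pi^2 * (((1/2 - t) + real k) * ((1/2 + t) + real k))"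
      by (simp add: xt power2_eq_square algebra_simps)
    moreover have "inverse ((1/2 - t) + real k) - inverse ((1/2 + t) + real k) = 2 * t / (((1/2 - t) + real k) * ((1/2 + t) + real k))"
      using a by (simp add: field_simps)
    moreover have "2 * t / P / (pi * x) = 8 / (4 * pi^2 * P)" if "P > 0" for P
      using that t pi_gt_zero by (simp add: xt field_simps power2_eq_square)
    moreover have "((1/2 - t) + real k) * ((1/2 + t) + real k) > 0" using a by simp
    ultimately show "(inverse ((1/2 - t) + real k) - inverse ((1/2 + t) + real k)) / (pi * x)
      = 8 / ((2 * real k + 1)^2 * pi^2 - 4 * x^2)"
      by presburger
  qed
  finally show ?thesis .
qed



lemma low_term:
  fixes M u p :: real
  assumes "M > 1" "0 < u" "u < 1" "p > 0"
  shows "(8/M + (8/M^2 - 8/M)*u + (-8/M^2)*u^2)/(p^2*(1-u)) < 8/(p^2*(M-u))"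
proof -
  have n: "M \<noteq> 0" "M - u \<noteq> 0" "1 - u \<noteq> 0" "p \<noteq> 0" using assms by auto
  have "8/(p^2*(M-u)) - (8/M + (8/M^2 - 8/M)*u + (-8/M^2)*u^2)/(p^2*(1-u)) = 8*u^2 / (M^2*p^2*(M-u))"
    using n by (simp add: divide_simps) (simp add: power2_eq_square algebra_simps)
  moreover have "8*u^2 / (M^2*p^2*(M-u)) > 0" using assms by (intro divide_pos_pos mult_pos_pos) auto
  ultimately show ?thesis by linarith
qed

lemma up_term:
  fixes M u p :: real
  assumes "M > 1" "0 < u" "u < 1" "p > 0"
  shows "8/(p^2*(M-u)) < (8/M + (-8/M - (-8 * (1/(M-1) - 1/M)))*u + (-8 * (1/(M-1) - 1/M))*u^2)/(p^2*(1-u))"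
proof -
  have n: "M \<noteq> 0" "M - u \<noteq> 0" "1 - u \<noteq> 0" "p \<noteq> 0" "M - 1 \<noteq> 0" using assms by auto
  have "(8/M + (-8/M - (-8 * (1/(M-1) - 1/M)))*u + (-8 * (1/(M-1) - 1/M))*u^2)/(p^2*(1-u)) - 8/(p^2*(M-u)) = 8*u*(1-u) / (M*(M-1)*p^2*(M-u))"
    using n by (simp add: divide_simps) (simp add: power2_eq_square algebra_simps)
  moreover have "8*u*(1-u) / (M*(M-1)*p^2*(M-u)) > 0" using assms by (intro divide_pos_pos mult_pos_pos) auto
  ultimately show ?thesis by linarith
qed


lemma main_lower:
  fixes x :: real
  assumes x: "0 < x" "x < pi / 2"
  shows "(pi^2 + ((pi^2 - 12) / 3) * x^2 + ((384 - 4 * pi^4) / (3 * pi^4)) * x^4) / (pi^2 - 4 * x^2) < tan x / x"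
proof -
  define u where "u = 4 * x^2 / pi^2"
  have pi0: "pi > 0" by simp
  have x2: "4 * x^2 = pi^2 * u" using pi0 by (simp add: u_def)
  have "2 * x < pi" using x by simp
  hence "(2*x)^2 < pi^2" using x by (intro power_strict_mono) auto
  hence u1: "u < 1" using pi0 by (simp add: u_def power_mult_distrib)
  have u0: "u > 0" using x by (simp add: u_def)
  define D where "D = pi^2 - 4 * x^2"
  have D: "D = pi^2 * (1 - u)" by (simp add: D_def x2 algebra_simps)
  have Dpos: "D > 0" using D u1 by simp
  define M where "M k = (2 * real k + 1)^2" for k
  define \<delta> where "\<delta> k = (if k = 0 then 1 else 0 :: real)" for k :: nat
  define l where "l k = 8 * (1 / M k) + (8 * (1 / (2 * real k + 1)^4) - 8 * (1 / M k)) * u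
      + (-8 * (1 / (2 * real k + 1)^4) + 8 * \<delta> k) * u^2" for k
  define Lv where "Lv = 8 * (pi^2/8) + (8 * (pi^4/96) - 8 * (pi^2/8)) * u + (-8 * (pi^4/96) + 8 * 1) * u^2"
  have sa: "(\<lambda>k. 1 / M k) sums (pi^2/8)" using sum_odd2 by (simp add: M_def)
  have sb: "(\<lambda>k. 1 / (2 * real k + 1)^4) sums (pi^4/96)" by (rule sum_odd4)
  have sd: "\<delta> sums 1" using sums_single[of 0 "\<lambda>_. 1::real"] by (simp add: \<delta>_def [abs_def])
  have sl: "l sums Lv" unfolding l_def[abs_def] Lv_def
    by (intro sums_add sums_mult sums_mult2 sums_diff sa sb sd)
  have st: "(\<lambda>k. 8 / (M k * pi^2 - 4 * x^2)) sums (tan x / x)"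
    using tan_series[OF x] by (simp add: M_def)
  have sdiff: "(\<lambda>k. 8 / (M k * pi^2 - 4 * x^2) - l k / D) sums (tan x / x - Lv / D)"
    by (intro sums_diff st sums_divide sl)
  have term_eq: "8 / (M k * pi^2 - 4 * x^2) = 8 / (pi^2 * (M k - u))" for k
    by (simp add: x2 algebra_simps)
  have t0: "l 0 / D = 8 / (M 0 * pi^2 - 4 * x^2)"
    by (simp add: l_def M_def \<delta>_def D_def)
  have tpos: "l k / D < 8 / (M k * pi^2 - 4 * x^2)" if "k \<ge> 1" for k
  proof -
    have M1: "M k > 1" using that by (simp add: M_def)
    have b: "1 / (2 * real k + 1)^4 = 1 / (M k)^2" by (simp add: M_def flip: power_mult)
    have "l k = 8/M k + (8/(M k)^2 - 8/M k)*u + (-8/(M k)^2)*u^2"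
      using that by (simp add: l_def b \<delta>_def)
    thus ?thesis using low_term[OF M1 u0 u1 pi0] by (simp only: term_eq D)
  qed
  have "0 < suminf (\<lambda>k. 8 / (M k * pi^2 - 4 * x^2) - l k / D)"
  proof (rule suminf_pos2[where i = 1])
    show "summable (\<lambda>k. 8 / (M k * pi^2 - 4 * x^2) - l k / D)" using sdiff by (rule sums_summable)
    show "0 \<le> 8 / (M k * pi^2 - 4 * x^2) - l k / D" for k
      using tpos[of k] t0 by (cases "k = 0") auto
    show "0 < 8 / (M 1 * pi^2 - 4 * x^2) - l 1 / D" using tpos[of 1] by simp
  qed
  hence "Lv / D < tan x / x" using sums_unique[OF sdiff] by simp
  moreover have "Lv = pi^2 + ((pi^2 - 12) / 3) * x^2 + ((384 - 4 * pi^4) / (3 * pi^4)) * x^4"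
    using pi0 by (simp add: Lv_def u_def field_simps power2_eq_square power4_eq_xxxx)
  ultimately show ?thesis by (simp add: D_def)
qed


lemma main_upper:
  fixes x :: real
  assumes x: "0 < x" "x < pi / 2"
  shows "tan x / x < (pi^2 + ((72 - 8 * pi^2) / pi^2) * x^2 + ((16 * pi^2 - 160) / pi^4) * x^4) / (pi^2 - 4 * x^2)"
proof -
  define u where "u = 4 * x^2 / pi^2"
  have pi0: "pi > 0" by simp
  have x2: "4 * x^2 = pi^2 * u" using pi0 by (simp add: u_def)
  have "2 * x < pi" using x by simp
  hence "(2*x)^2 < pi^2" using x by (intro power_strict_mono) auto
  hence u1: "u < 1" using pi0 by (simp add: u_def power_mult_distrib)
  have u0: "u > 0" using x by (simp add: u_def)
  define D where "D = pi^2 - 4 * x^2"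
  have D: "D = pi^2 * (1 - u)" by (simp add: D_def x2 algebra_simps)
  have Dpos: "D > 0" using D u1 by simp
  define M where "M k = (2 * real k + 1)^2" for k
  define \<delta> where "\<delta> k = (if k = 0 then 1 else 0 :: real)" for k :: nat
  define c where "c k = -8 * (1 / (M k - 1) - 1 / M k + \<delta> k)" for k
  define C where "C = -8 * (1/4 - pi^2/8 + 1)"
  define l where "l k = 8 * (1 / M k) + (-8 * (1 / M k) - c k + 8 * \<delta> k) * u + c k * u^2" for k
  define Lv where "Lv = 8 * (pi^2/8) + (-8 * (pi^2/8) - C + 8 * 1) * u + C * u^2"
  have sa: "(\<lambda>k. 1 / M k) sums (pi^2/8)" using sum_odd2 by (simp add: M_def)
  have se: "(\<lambda>k. 1 / (M k - 1)) sums (1/4)" using sum_tele by (simp add: M_def)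
  have sd: "\<delta> sums 1" using sums_single[of 0 "\<lambda>_. 1::real"] by (simp add: \<delta>_def [abs_def])
  have sc: "c sums C" unfolding c_def[abs_def] C_def
    by (intro sums_add sums_mult sums_diff sa se sd)
  have sl: "l sums Lv" unfolding l_def[abs_def] Lv_def
    by (intro sums_add sums_mult sums_mult2 sums_diff sa sc sd)
  have st: "(\<lambda>k. 8 / (M k * pi^2 - 4 * x^2)) sums (tan x / x)"
    using tan_series[OF x] by (simp add: M_def)
  have sdiff: "(\<lambda>k. l k / D - 8 / (M k * pi^2 - 4 * x^2)) sums (Lv / D - tan x / x)"
    by (intro sums_diff st sums_divide sl)
  have term_eq: "8 / (M k * pi^2 - 4 * x^2) = 8 / (pi^2 * (M k - u))" for k
    by (simp add: x2 algebra_simps)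
  have t0: "l 0 / D = 8 / (M 0 * pi^2 - 4 * x^2)"
    by (simp add: l_def M_def \<delta>_def D_def c_def)
  have tpos: "8 / (M k * pi^2 - 4 * x^2) < l k / D" if "k \<ge> 1" for k
  proof -
    have M1: "M k > 1" using that by (simp add: M_def)
    have "l k = 8/M k + (-8/M k - (-8 * (1/(M k-1) - 1/M k)))*u + (-8 * (1/(M k-1) - 1/M k))*u^2"
      using that by (simp add: l_def c_def \<delta>_def)
    thus ?thesis using up_term[OF M1 u0 u1 pi0] by (simp only: term_eq D)
  qed
  have "0 < suminf (\<lambda>k. l k / D - 8 / (M k * pi^2 - 4 * x^2))"
  proof (rule suminf_pos2[where i = 1])
    show "summable (\<lambda>k. l k / D - 8 / (M k * pi^2 - 4 * x^2))" using sdiff by (rule sums_summable)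
    show "0 \<le> l k / D - 8 / (M k * pi^2 - 4 * x^2)" for k
      using tpos[of k] t0 by (cases "k = 0") auto
    show "0 < l 1 / D - 8 / (M 1 * pi^2 - 4 * x^2)" using tpos[of 1] by simp
  qed
  hence "tan x / x < Lv / D" using sums_unique[OF sdiff] by simp
  moreover have "Lv = pi^2 + ((72 - 8 * pi^2) / pi^2) * x^2 + ((16 * pi^2 - 160) / pi^4) * x^4"
    using pi0 by (simp add: Lv_def C_def u_def field_simps power2_eq_square power4_eq_xxxx)
  ultimately show ?thesis by (simp add: D_def)
qed


theorem mainTheorem15:
  fixes x :: real
  assumes "0 < x" and "x < pi / 2"
  shows "(pi^2 + ((pi^2 - 12) / 3) * x^2 + ((384 - 4 * pi^4) / (3 * pi^4)) * x^4) / (pi^2 - 4 * x^2)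
           < tan x / x \<and>
         tan x / x
           < (pi^2 + ((72 - 8 * pi^2) / pi^2) * x^2 + ((16 * pi^2 - 160) / pi^4) * x^4) / (pi^2 - 4 * x^2)"
  using main_lower[OF assms] main_upper[OF assms] by blast

end
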